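(* Let $n$ run over positive integers such that $m=n^2+1$ satisfies $r_2(m)\le32$, and let $\lambda=m+\delta$ with $0<|\delta|<1/10$; put $R=\sqrt\lambda$ and $w=(0,2)$. Then, for $R$ sufficiently large, $$\sum_{v\in\mathbb{Z}^2}C(v,w)\ \ge\ \frac{2}{\delta^2}+O\Big(\frac{1}{|\delta|}\Big)+\sum_{v\in V_2}S_w(v),$$ with an absolute implied constant.
   Context: $r_2(m)=\#\{\xi\in\mathbb{Z}^2:|\xi|^2=m\}$. For $v\in\mathbb{Z}^2$, $c(v)=\frac{1}{|v|^2-\lambda}$ and $C(v,w)=c(v)c(v+w)$. $V_2=\{v\in\mathbb{Z}^2: C(v,w)<0,\ |v|^2\ne m,\ |v+w|^2\ne m,\ \sqrt R/2\le|\langle v,w\rangle|\le3R\}$. For $v\in\mathbb{Z}^2$, let $\operatorname{Nbr}_w(v)=\{C(v-w,w)+C(v,w),\ C(v,w)+C(v+w,w)\}$ and let $S_w(v)$ be the element of $\operatorname{Nbr}_w(v)$ of smallest absolute value (the smaller one in case of a tie). *)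

theory Defs
  imports "HOL-Analysis.Analysis"
begin

definition r2 :: "nat \<Rightarrow> nat" where
  "r2 m = card {\<xi> :: int \<times> int. (fst \<xi>)\<^sup>2 + (snd \<xi>)\<^sup>2 = int m}"

definition nsq :: "int \<times> int \<Rightarrow> int" where
  "nsq v = (fst v)\<^sup>2 + (snd v)\<^sup>2"

definition ip :: "int \<times> int \<Rightarrow> int \<times> int \<Rightarrow> int" where
  "ip v w = fst v * fst w + snd v * snd w"

definition vadd :: "int \<times> int \<Rightarrow> int \<times> int \<Rightarrow> int \<times> int" where
  "vadd v w = (fst v + fst w, snd v + snd w)"

definition vsub :: "int \<times> int \<Rightarrow> int \<times> int \<Rightarrow> int \<times> int" where
  "vsub v w = (fst v - fst w, snd v - snd w)"

definition cfun :: "real \<Rightarrow> int \<times> int \<Rightarrow> real" where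
  "cfun lam v = 1 / (real_of_int (nsq v) - lam)"

definition Cfun :: "real \<Rightarrow> int \<times> int \<Rightarrow> int \<times> int \<Rightarrow> real" where
  "Cfun lam v w = cfun lam v * cfun lam (vadd v w)"

definition V2 :: "real \<Rightarrow> nat \<Rightarrow> real \<Rightarrow> int \<times> int \<Rightarrow> (int \<times> int) set" where
  "V2 lam m R w = {v. Cfun lam v w < 0 \<and> nsq v \<noteq> int m \<and> nsq (vadd v w) \<noteq> int m \<and>
      sqrt R / 2 \<le> \<bar>real_of_int (ip v w)\<bar> \<and> \<bar>real_of_int (ip v w)\<bar> \<le> 3 * R}"

text \<open>S_w(v): element of Nbr_w(v) of smallest absolute value (smaller one on ties).\<close>
definition Sfun :: "real \<Rightarrow> int \<times> int \<Rightarrow> int \<times> int \<Rightarrow> real" where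
  "Sfun lam w v =
     (let a = Cfun lam (vsub v w) w + Cfun lam v w;
          b = Cfun lam v w + Cfun lam (vadd v w) w
      in if \<bar>a\<bar> < \<bar>b\<bar> then a else if \<bar>b\<bar> < \<bar>a\<bar> then b else min a b)"

end

theory Submission
  imports Defs
begin

definition ff :: "int \<Rightarrow> real" where "ff a = 1 / (1 + (real_of_int a)^2)"

lemma ff_nonneg: "ff a \<ge> 0" unfolding ff_def by simp

lemma summable_nat_ff: "(\<lambda>n::nat. ff (int n)) summable_on UNIV"
proof (rule summable_nonneg_imp_summable_on)
  show "summable (\<lambda>n::nat. ff (int n))"
  proof (rule summable_comparison_test'[where N=1])
    show "summable (\<lambda>n::nat. inverse (real n ^ 2))"
      by (rule inverse_power_summable) auto
    fix n :: nat assume "1 \<le> n"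
    then show "norm (ff (int n)) \<le> inverse (real n ^ 2)"
      unfolding ff_def by (simp add: inverse_eq_divide frac_le)
  qed
qed (simp add: ff_nonneg)

lemma summable_ff: "ff summable_on (UNIV::int set)"
proof -
  have A: "ff summable_on (range int)"
    using summable_nat_ff summable_on_reindex[of int UNIV ff] by (simp add: o_def)
  have "(\<lambda>n::nat. ff (- int n - 1)) summable_on UNIV"
  proof (rule summable_on_comparison_test[OF summable_nat_ff])
    fix n :: nat
    have "(real n)^2 \<le> (- real n - 1)^2" by (simp add: power2_eq_square algebra_simps)
    then show "ff (- int n - 1) \<le> ff (int n)" unfolding ff_def
      by (intro divide_left_mono) (auto intro!: mult_pos_pos add_pos_nonneg)
  qed (simp add: ff_nonneg)
  moreover have "inj (\<lambda>n::nat. - int n - 1)" by (auto simp: inj_def)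
  ultimately have B: "ff summable_on (range (\<lambda>n::nat. - int n - 1))"
    using summable_on_reindex[of "\<lambda>n::nat. - int n - 1" UNIV ff] by (simp add: o_def)
  have U: "(UNIV::int set) = range int \<union> range (\<lambda>n::nat. - int n - 1)"
  proof -
    have "x \<in> range int \<union> range (\<lambda>n::nat. - int n - 1)" for x :: int
    proof (cases "x \<ge> 0")
      case True then show ?thesis by (metis UnI1 nonneg_int_cases rangeI)
    next
      case False
      then have "x = - int (nat (-x-1)) - 1" by simp
      then show ?thesis by blast
    qed
    then show ?thesis by blast
  qed
  have D: "range int \<inter> range (\<lambda>n::nat. - int n - 1) = {}" by auto
  show ?thesis using summable_on_Un_disjoint[OF A B D] U by simp
qed

lemma summable_ff2: "(\<lambda>v::int\<times>int. ff (fst v) * ff (snd v)) summable_on UNIV"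
proof -
  have "(\<lambda>v::int\<times>int. ff (fst v) * ff (snd v)) summable_on Sigma UNIV (\<lambda>_. UNIV)"
  proof (rule summable_on_SigmaI[where g="\<lambda>x. ff x * infsum ff UNIV"])
    fix x :: int
    show "((\<lambda>y. ff (fst (x, y)) * ff (snd (x, y))) has_sum ff x * infsum ff UNIV) UNIV"
      using has_sum_cmult_right[OF has_sum_infsum[OF summable_ff], of "ff x"] by simp
    show "ff (fst (x, y)) * ff (snd (x, y)) \<ge> 0" for y by (simp add: ff_nonneg)
  next
    show "(\<lambda>x. ff x * infsum ff UNIV) summable_on UNIV"
      by (rule summable_on_cmult_left[OF summable_ff])
  qed
  then show ?thesis by simp
qed

lemma dist_lam:
  assumes "lam = real m + d" "\<bar>d\<bar> < 1/10"
  shows "\<bar>d\<bar> \<le> \<bar>real_of_int k - lam\<bar>" and "k \<noteq> int m \<Longrightarrow> 9/10 \<le> \<bar>real_of_int k - lam\<bar>"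
proof -
  define j where "j = k - int m"
  have e: "real_of_int k - lam = real_of_int j - d" using assms(1) unfolding j_def by simp
  have "j = 0 \<or> 1 \<le> \<bar>j\<bar>" by auto
  then have "j = 0 \<or> 1 \<le> \<bar>real_of_int j\<bar>" by (metis of_int_1_le_iff of_int_abs)
  then show "\<bar>d\<bar> \<le> \<bar>real_of_int k - lam\<bar>" using e assms(2) by auto
  show "9/10 \<le> \<bar>real_of_int k - lam\<bar>" if "k \<noteq> int m"
  proof -
    have "1 \<le> \<bar>real_of_int j\<bar>" using that unfolding j_def
      by (metis of_int_1_le_iff of_int_abs right_minus_eq zero_less_abs_iff int_one_le_iff_zero_less)
    then show ?thesis using e assms(2) abs_triangle_ineq2[of "real_of_int j" d] by auto
  qed
qed

lemma c_sq_bound: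
  assumes "lam = real m + d" "0 < \<bar>d\<bar>" "\<bar>d\<bar> < 1/10" "m \<ge> 1"
  shows "(cfun lam x)^2 \<le> (1 / (\<bar>d\<bar>/(2*lam+2))^2) * (ff (fst x) * ff (snd x))"
proof -
  define e where "e = \<bar>d\<bar>/(2*lam+2)"
  define t where "t = real_of_int (nsq x)"
  define a where "a = real_of_int (fst x)"
  define b where "b = real_of_int (snd x)"
  have t: "t = a^2 + b^2" unfolding t_def a_def b_def nsq_def by simp
  have lampos: "lam > 0" using assms by simp
  have epos: "e > 0" unfolding e_def using lampos assms by simp
  have ehalf: "e \<le> 1/2" unfolding e_def using lampos assms by (simp add: field_simps)
  have D: "\<bar>d\<bar> \<le> \<bar>t - lam\<bar>" unfolding t_def by (rule dist_lam(1)[OF assms(1) assms(3)])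
  have key: "e * (1 + t) \<le> \<bar>t - lam\<bar>"
  proof (cases "t \<ge> 2*lam+1")
    case True
    then have "e * (1+t) \<le> (1/2)*(1+t)" using ehalf t by (intro mult_right_mono) auto
    then show ?thesis using True by auto
  next
    case False
    then have "e * (1+t) \<le> e * (2*lam+2)" using epos by (intro mult_left_mono) auto
    also have "\<dots> = \<bar>d\<bar>" unfolding e_def using lampos by simp
    finally show ?thesis using D by simp
  qed
  have t0: "t \<ge> 0" using t by simp
  have sq: "(e*(1+t))^2 \<le> (t-lam)^2"
  proof -
    have "(e*(1+t))^2 \<le> \<bar>t - lam\<bar>^2" using key epos t0 by (intro power_mono) auto
    then show ?thesis by simp
  qed
  have pr: "(1+a^2)*(1+b^2) \<le> (1+t)^2"
  proof -
    have "0 \<le> a^2*b^2 + a^2 + b^2 + a^4 + b^4" by simp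
    then show ?thesis unfolding t by (simp add: power2_eq_square algebra_simps power4_eq_xxxx)
  qed
  have pos: "0 < e^2 * ((1+a^2)*(1+b^2))" using epos by (simp add: add_pos_nonneg)
  have "e^2 * ((1+a^2)*(1+b^2)) \<le> e^2 * (1+t)^2" using pr by (intro mult_left_mono) auto
  also have "\<dots> \<le> (t-lam)^2" using sq by (simp add: power_mult_distrib)
  finally have le: "e^2 * ((1+a^2)*(1+b^2)) \<le> (t-lam)^2" .
  have "(cfun lam x)^2 = 1/(t-lam)^2" unfolding cfun_def t_def by (simp add: power_divide)
  also have "\<dots> \<le> 1/(e^2 * ((1+a^2)*(1+b^2)))" using le pos by (intro divide_left_mono mult_pos_pos add_pos_nonneg) auto
  also have "\<dots> = (1/e^2) * (ff (fst x) * ff (snd x))" unfolding ff_def a_def b_def by simp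
  finally show ?thesis unfolding e_def .
qed
lemma ff_shift: "ff (b + 2) \<le> 9 * ff b"
proof -
  have "1 + (real_of_int b)^2 \<le> 9 * (1 + (real_of_int b + 2)^2)"
  proof -
    have "0 \<le> 8 * (real_of_int b + 9/4)^2 + 7/2" by simp
    then show ?thesis by (simp add: power2_eq_square algebra_simps)
  qed
  then show ?thesis unfolding ff_def by (simp add: field_simps add_pos_nonneg)
qed

lemma summable_C:
  assumes "lam = real m + d" "0 < \<bar>d\<bar>" "\<bar>d\<bar> < 1/10" "m \<ge> 1"
  shows "(\<lambda>v. Cfun lam v (0,2)) summable_on UNIV"
proof -
  define M where "M = 1 / (\<bar>d\<bar>/(2*lam+2))^2"
  have M0: "M \<ge> 0" unfolding M_def by simp
  have bd: "norm (Cfun lam v (0,2)) \<le> (5*M) * (ff (fst v) * ff (snd v))" for v :: "int \<times> int"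
  proof -
    have h1: "(cfun lam v)^2 \<le> M * (ff (fst v) * ff (snd v))"
      unfolding M_def by (rule c_sq_bound[OF assms])
    have h2: "(cfun lam (vadd v (0,2)))^2 \<le> M * (ff (fst v) * ff (snd v + 2))"
      using c_sq_bound[OF assms, of "vadd v (0,2)"] unfolding M_def by (simp add: vadd_def)
    have "ff (fst v) * ff (snd v + 2) \<le> ff (fst v) * (9 * ff (snd v))"
      using ff_shift ff_nonneg by (intro mult_left_mono) auto
    then have "M * (ff (fst v) * ff (snd v + 2)) \<le> M * (ff (fst v) * (9 * ff (snd v)))"
      using M0 by (rule mult_left_mono)
    then have h3: "(cfun lam (vadd v (0,2)))^2 \<le> 9 * M * (ff (fst v) * ff (snd v))"
      using h2 by (simp add: algebra_simps)
    have "\<bar>cfun lam v * cfun lam (vadd v (0,2))\<bar> \<le> ((cfun lam v)^2 + (cfun lam (vadd v (0,2)))^2)/2"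
    proof -
      have "0 \<le> (\<bar>cfun lam v\<bar> - \<bar>cfun lam (vadd v (0,2))\<bar>)^2" by simp
      then show ?thesis by (simp add: power2_eq_square algebra_simps abs_mult)
    qed
    note prev = this
    have aux: "p \<le> 5 * X" if "p \<le> (q + r)/2" "q \<le> X" "r \<le> 9 * X" for p q r X :: real
      using that by argo
    show ?thesis unfolding Cfun_def real_norm_def mult.assoc by (rule aux[OF prev h1 h3[unfolded mult.assoc]])
  qed
  have "(\<lambda>v. norm (Cfun lam v (0,2))) summable_on UNIV"
    by (rule summable_on_comparison_test[OF summable_on_cmult_right[OF summable_ff2, of "5*M"]])
       (use bd in auto)
  then show ?thesis by (rule abs_summable_summable)
qed
lemma column1:
  fixes Y A :: real
  assumes h1: "(Y^2 - A) * ((Y+2)^2 - A) < 0" and h2: "((Y+4)^2 - A) * ((Y+6)^2 - A) < 0"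
    and h3: "0 \<le> ((Y+2)^2 - A) * ((Y+4)^2 - A)"
  shows "-5 < Y \<and> Y < -1"
proof -
  define g0 where "g0 = Y^2 - A"
  define g2 where "g2 = (Y+2)^2 - A"
  define g3 where "g3 = (Y+4)^2 - A"
  define g4 where "g4 = (Y+6)^2 - A"
  have h1': "g0 * g2 < 0" and h2': "g3 * g4 < 0" and h3': "0 \<le> g2 * g3"
    using h1 h2 h3 unfolding g0_def g2_def g3_def g4_def by auto
  have conv: "3 * g2 \<le> 2 * g0 + g4" unfolding g0_def g2_def g4_def by (simp add: power2_eq_square algebra_simps)
  have d1: "g0 - g2 = - 4*Y - 4" unfolding g0_def g2_def by (simp add: power2_eq_square algebra_simps)
  have d2: "g4 - g3 = 4*Y + 20" unfolding g3_def g4_def by (simp add: power2_eq_square algebra_simps)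
  have "g2 > 0 \<or> g2 < 0" using h1' by (cases "g2 = 0") auto
  then show ?thesis
  proof
    assume p: "g2 > 0"
    then have a: "g0 < 0" using h1' by (simp add: mult_less_0_iff)
    have "g3 \<ge> 0" using h3' p by (simp add: zero_le_mult_iff)
    then have "g3 > 0" using h2' by (cases "g3 = 0") auto
    then have "g4 < 0" using h2' by (simp add: mult_less_0_iff)
    then show ?thesis using a conv p by linarith
  next
    assume p: "g2 < 0"
    then have a: "g0 > 0" using h1' by (simp add: mult_less_0_iff)
    have "g3 \<le> 0" using h3' p by (simp add: zero_le_mult_iff)
    then have b: "g3 < 0" using h2' by (cases "g3 = 0") auto
    then have "g4 > 0" using h2' by (simp add: mult_less_0_iff)
    then show ?thesis using a b d1 d2 p by linarith
  qed
qed

lemma Cfun_sign: "Cfun lam v w = 1 / ((real_of_int (nsq v) - lam) * (real_of_int (nsq (vadd v w)) - lam))"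
  unfolding Cfun_def cfun_def by simp

lemma Cfun_neg_iff: "Cfun lam v w < 0 \<longleftrightarrow> (real_of_int (nsq v) - lam) * (real_of_int (nsq (vadd v w)) - lam) < 0"
  unfolding Cfun_sign by (simp add: divide_less_0_iff)

lemma Cfun_nonneg_iff: "Cfun lam v w \<ge> 0 \<longleftrightarrow> (real_of_int (nsq v) - lam) * (real_of_int (nsq (vadd v w)) - lam) \<ge> 0"
  unfolding Cfun_sign by (simp add: zero_le_divide_iff)

lemma column2:
  fixes x y :: int and n :: nat and d lam :: real
  assumes n: "n \<ge> 100" and yb: "16 * y^2 < int n + 1" and lam: "lam = real (n^2+1) + d" and d: "\<bar>d\<bar> < 1/10"
    and neg: "(real_of_int (x^2 + y^2) - lam) * (real_of_int (x^2 + (y+2)^2) - lam) < 0"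
  shows "\<bar>x\<bar> = int n \<and> -3 \<le> y \<and> y \<le> 1"
proof -
  define M where "M = int n ^ 2 + 1"
  define p where "p = x^2 + y^2"
  define q where "q = x^2 + (y+2)^2"
  have lamM: "lam = real_of_int M + d" unfolding M_def lam by simp
  have "(real_of_int p < lam \<and> lam < real_of_int q) \<or> (real_of_int q < lam \<and> lam < real_of_int p)"
    using neg unfolding p_def q_def by (auto simp: mult_less_0_iff)
  then have cases: "(p \<le> M \<and> M \<le> q) \<or> (q \<le> M \<and> M \<le> p)"
  proof
    assume "real_of_int p < lam \<and> lam < real_of_int q"
    then have "real_of_int p < real_of_int M + 1" "real_of_int M - 1 < real_of_int q" using lamM d by auto
    then have "p < M + 1" "M - 1 < q" by linarith+
    then show ?thesis by auto
  next
    assume "real_of_int q < lam \<and> lam < real_of_int p"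
    then have "real_of_int q < real_of_int M + 1" "real_of_int M - 1 < real_of_int p" using lamM d by auto
    then have "q < M + 1" "M - 1 < p" by linarith+
    then show ?thesis by auto
  qed
  have y2: "(y+2)^2 < 2 * int n" and y0: "y^2 < 2 * int n"
  proof -
    have "0 \<le> (y-2)^2" by simp
    then have "(y+2)^2 \<le> 2*y^2 + 8" by (simp add: power2_eq_square algebra_simps)
    then show "(y+2)^2 < 2 * int n" using yb n by linarith
    show "y^2 < 2 * int n" using yb n by linarith
  qed
  have xn: "\<bar>x\<bar> = int n"
  proof (rule ccontr)
    assume ne: "\<bar>x\<bar> \<noteq> int n"
    then have "\<bar>x\<bar> \<ge> int n + 1 \<or> \<bar>x\<bar> \<le> int n - 1" by linarith
    then show False
    proof
      assume a: "\<bar>x\<bar> \<ge> int n + 1"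
      then have "(int n + 1)^2 \<le> \<bar>x\<bar>^2" by (intro power_mono) auto
      then have "x^2 \<ge> M + 2 * int n" unfolding M_def by (simp add: power2_eq_square algebra_simps)
      moreover have "0 \<le> y^2" "0 \<le> (y+2)^2" by simp_all
      ultimately show False using cases n unfolding p_def q_def by linarith
    next
      assume a: "\<bar>x\<bar> \<le> int n - 1"
      then have "\<bar>x\<bar>^2 \<le> (int n - 1)^2" by (intro power_mono) auto
      then have "x^2 + 2 * int n \<le> M" unfolding M_def by (simp add: power2_eq_square algebra_simps)
      then show False using cases y2 y0 unfolding p_def q_def by linarith
    qed
  qed
  then have x2: "x^2 = int n ^ 2" by (metis power2_abs)
  have "(y^2 \<le> 1 \<and> 1 \<le> (y+2)^2) \<or> ((y+2)^2 \<le> 1 \<and> 1 \<le> y^2)"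
    using cases x2 unfolding p_def q_def M_def by auto
  then show ?thesis
  proof
    assume "y^2 \<le> 1 \<and> 1 \<le> (y+2)^2"
    then have "\<bar>y\<bar> \<le> 1" by (metis abs_le_square_iff abs_one one_power2 power2_abs)
    then show ?thesis using xn by auto
  next
    assume "(y+2)^2 \<le> 1 \<and> 1 \<le> y^2"
    then have "\<bar>y+2\<bar> \<le> 1" by (metis abs_le_square_iff abs_one one_power2 power2_abs)
    then show ?thesis using xn by auto
  qed
qed
lemma int_abs_le_sq: "\<bar>a::int\<bar> \<le> a^2"
proof (cases "a = 0")
  case False
  then have "\<bar>a\<bar> * 1 \<le> \<bar>a\<bar> * \<bar>a\<bar>" by (intro mult_left_mono) auto
  then show ?thesis by (simp add: power2_eq_square abs_mult_self_eq)
qed simp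

lemma finite_disc: "finite {v::int\<times>int. nsq v \<le> k}"
proof (rule finite_subset)
  show "{v::int\<times>int. nsq v \<le> k} \<subseteq> {-k..k} \<times> {-k..k}"
  proof
    fix v :: "int\<times>int" assume "v \<in> {v. nsq v \<le> k}"
    then have h: "(fst v)^2 + (snd v)^2 \<le> k" by (simp add: nsq_def)
    have "\<bar>fst v\<bar> \<le> k" using int_abs_le_sq[of "fst v"] h zero_le_power2[of "snd v"] by linarith
    moreover have "\<bar>snd v\<bar> \<le> k" using int_abs_le_sq[of "snd v"] h zero_le_power2[of "fst v"] by linarith
    ultimately show "v \<in> {-k..k} \<times> {-k..k}" by (cases v) auto
  qed
qed simp

lemma cbound:
  assumes "lam = real m + d" "\<bar>d\<bar> < 1/10" "0 < \<bar>d\<bar>"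
  shows "\<bar>cfun lam x\<bar> \<le> 1/\<bar>d\<bar>" and "nsq x \<noteq> int m \<Longrightarrow> \<bar>cfun lam x\<bar> \<le> 10/9"
proof -
  have D: "\<bar>d\<bar> \<le> \<bar>real_of_int (nsq x) - lam\<bar>" by (rule dist_lam(1)[OF assms(1,2)])
  then show "\<bar>cfun lam x\<bar> \<le> 1/\<bar>d\<bar>" unfolding cfun_def using assms(3)
    by (simp add: frac_le)
  show "\<bar>cfun lam x\<bar> \<le> 10/9" if "nsq x \<noteq> int m"
  proof -
    have "9/10 \<le> \<bar>real_of_int (nsq x) - lam\<bar>" by (rule dist_lam(2)[OF assms(1,2) that])
    then show ?thesis unfolding cfun_def using frac_le[of 1 1 "9/10" "\<bar>real_of_int (nsq x) - lam\<bar>"] by simp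
  qed
qed

lemma no_cross:
  assumes v: "v \<in> V2 lam m R (0,2)" and v': "v' \<in> V2 lam m R (0,2)"
    and eq: "vsub v (0,2) = vadd v' (0,2)" and u: "Cfun lam (vsub v (0,2)) (0,2) \<ge> 0"
    and sR: "sqrt R \<ge> 10"
  shows False
proof -
  obtain x y where vxy: "v = (x,y)" by (cases v)
  have v'xy: "v' = (x, y-4)" using eq vxy by (cases v') (auto simp: vsub_def vadd_def)
  define Y where "Y = real_of_int y - 4"
  define A where "A = lam - (real_of_int x)^2"
  have n1: "Cfun lam v' (0,2) < 0" using v' by (simp add: V2_def)
  have n2: "Cfun lam v (0,2) < 0" using v by (simp add: V2_def)
  have e0: "real_of_int (nsq v') - lam = Y^2 - A" unfolding v'xy Y_def A_def nsq_def by simp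
  have e1: "real_of_int (nsq (vadd v' (0,2))) - lam = (Y+2)^2 - A" unfolding v'xy Y_def A_def nsq_def vadd_def
    by (simp add: algebra_simps)
  have e2: "real_of_int (nsq v) - lam = (Y+4)^2 - A" unfolding vxy Y_def A_def nsq_def by simp
  have e3: "real_of_int (nsq (vadd v (0,2))) - lam = (Y+6)^2 - A" unfolding vxy Y_def A_def nsq_def vadd_def
    by (simp add: algebra_simps)
  have e4: "vsub v (0,2) = vadd v' (0,2)" by (rule eq)
  have e5: "vadd (vsub v (0,2)) (0,2) = v" unfolding vxy by (simp add: vsub_def vadd_def)
  have h1: "(Y^2 - A)*((Y+2)^2 - A) < 0" using n1 unfolding Cfun_neg_iff e0 e1 .
  have h2: "((Y+4)^2 - A)*((Y+6)^2 - A) < 0" using n2 unfolding Cfun_neg_iff e2 e3 .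
  have h3: "0 \<le> ((Y+2)^2 - A)*((Y+4)^2 - A)" using u unfolding Cfun_nonneg_iff e5 e2
    unfolding e4 e1 .
  have "-5 < Y \<and> Y < -1" by (rule column1[OF h1 h2 h3])
  then have "0 \<le> y \<and> y \<le> 2" unfolding Y_def by linarith
  then have "\<bar>real_of_int (ip v (0,2))\<bar> \<le> 4" unfolding vxy ip_def by simp
  moreover have "sqrt R / 2 \<le> \<bar>real_of_int (ip v (0,2))\<bar>" using v by (simp add: V2_def)
  ultimately show False using sR by linarith
qed

lemma main:
  fixes n :: nat and \<delta> :: real
  assumes n1: "1 \<le> n" and r2: "r2 (n^2+1) \<le> 32" and d0: "0 < \<bar>\<delta>\<bar>" and d1: "\<bar>\<delta>\<bar> < 1/10"
    and R0: "100 \<le> sqrt (real (n^2+1) + \<delta>)"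
  shows "(\<lambda>v. Cfun (real (n^2+1) + \<delta>) v (0,2)) summable_on UNIV \<and>
     2 / \<delta>^2 - 148 / \<bar>\<delta>\<bar> + (\<Sum>v\<in>V2 (real (n^2+1) + \<delta>) (n^2+1) (sqrt (real (n^2+1) + \<delta>)) (0,2).
        Sfun (real (n^2+1) + \<delta>) (0,2) v) \<le> (\<Sum>\<^sub>\<infinity>v. Cfun (real (n^2+1) + \<delta>) v (0,2))"
proof -
  define m where "m = n^2 + 1"
  define lam where "lam = real m + \<delta>"
  define R where "R = sqrt lam"
  define w where "w = ((0::int), (2::int))"
  define C where "C = (\<lambda>v. Cfun lam v w)"
  have m1: "m \<ge> 1" unfolding m_def by simp
  have lamdef: "lam = real m + \<delta>" by (simp add: lam_def)
  have summ: "C summable_on UNIV" unfolding C_def w_def by (rule summable_C[OF lamdef d0 d1 m1])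
  have lampos: "lam > 0" unfolding lam_def using m1 d1 by simp
  have R100: "R \<ge> 100" using R0 unfolding R_def lam_def m_def by simp
  have sR: "sqrt R \<ge> 10"
  proof -
    have "sqrt 100 \<le> sqrt R" using R100 by (rule real_sqrt_le_mono)
    moreover have "sqrt 100 = (10::real)" by (rule real_sqrt_unique) auto
    ultimately show ?thesis by simp
  qed
  have RR: "R^2 = lam" unfolding R_def using lampos by simp
  have Rn: "R < real n + 1"
  proof -
    have "lam < (real n + 1)^2" unfolding lam_def m_def using d1 n1 by (simp add: power2_eq_square algebra_simps)
    then have "sqrt lam < sqrt ((real n + 1)^2)" by (simp only: real_sqrt_less_iff)
    then show ?thesis unfolding R_def by simp
  qed
  have n100: "n \<ge> 100" using Rn R100 by linarith
  define N where "N = {v. C v < 0}"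
  define V where "V = V2 lam m R w"
  have nsq_add: "nsq (vadd v w) = (fst v)^2 + (snd v + 2)^2" for v unfolding nsq_def vadd_def w_def by simp
  have nsq_v: "nsq v = (fst v)^2 + (snd v)^2" for v unfolding nsq_def by simp
  have ipv: "ip v w = 2 * snd v" for v unfolding ip_def w_def by simp
  have negN: "(real_of_int (nsq v) - lam) * (real_of_int (nsq (vadd v w)) - lam) < 0" if "v \<in> N" for v
    using that unfolding N_def C_def Cfun_neg_iff by simp
  have inN: "nsq v \<le> int m \<or> nsq (vadd v w) \<le> int m" if "v \<in> N" for v
  proof -
    have "real_of_int (nsq v) < lam \<or> real_of_int (nsq (vadd v w)) < lam"
      using negN[OF that] by (auto simp: mult_less_0_iff)
    then have "real_of_int (nsq v) < real_of_int (int m + 1) \<or> real_of_int (nsq (vadd v w)) < real_of_int (int m + 1)"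
      unfolding lam_def using d1 by auto
    then show ?thesis by linarith
  qed
  have finN: "finite N"
  proof (rule finite_subset)
    show "N \<subseteq> {v. nsq v \<le> int m} \<union> (\<lambda>v. vadd v w) -` {v. nsq v \<le> int m}" using inN by auto
    have "inj (\<lambda>v. vadd v w)" by (auto simp: inj_def vadd_def)
    then have "finite ((\<lambda>v. vadd v w) -` {v. nsq v \<le> int m})"
      by (rule finite_vimageI[OF finite_disc])
    then show "finite ({v. nsq v \<le> int m} \<union> (\<lambda>v. vadd v w) -` {v. nsq v \<le> int m})"
      using finite_disc by (rule finite_UnI[rotated])
  qed
  have VN: "V \<subseteq> N" unfolding V_def N_def C_def V2_def by auto
  have finV: "finite V" using finN VN finite_subset by blast
  define aa where "aa = (\<lambda>v. C (vsub v w) + C v)"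
  define bb where "bb = (\<lambda>v. C v + C (vadd v w))"
  define idx where "idx = (\<lambda>v. if \<bar>aa v\<bar> < \<bar>bb v\<bar> \<or> (\<not> \<bar>bb v\<bar> < \<bar>aa v\<bar> \<and> aa v \<le> bb v) then vsub v w else vadd v w)"
  have Seq: "Sfun lam w v = C v + C (idx v)" for v
    unfolding Sfun_def Let_def idx_def aa_def bb_def C_def by (auto simp: min_def)
  define V' where "V' = {v \<in> V. C (idx v) \<ge> 0}"
  define U where "U = idx ` V'"
  have idx_cases: "idx v = vsub v w \<or> idx v = vadd v w" for v unfolding idx_def by auto
  have injV': "inj_on idx V'"
  proof (rule inj_onI)
    fix v v' assume v: "v \<in> V'" and v': "v' \<in> V'" and eq: "idx v = idx v'"
    have vV: "v \<in> V2 lam m R (0,2)" and v'V: "v' \<in> V2 lam m R (0,2)" using v v' unfolding V'_def V_def w_def by auto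
    have cv: "C (idx v) \<ge> 0" and cv': "C (idx v') \<ge> 0" using v v' unfolding V'_def by auto
    show "v = v'"
    proof (cases "idx v = vsub v w")
      case A: True
      show ?thesis
      proof (cases "idx v' = vsub v' w")
        case True then show ?thesis using A eq by (cases v, cases v') (auto simp: vsub_def)
      next
        case False
        then have B: "idx v' = vadd v' w" using idx_cases by blast
        have "vsub v (0,2) = vadd v' (0,2)" using A B eq unfolding w_def by simp
        moreover have "Cfun lam (vsub v (0,2)) (0,2) \<ge> 0" using cv A unfolding C_def w_def by simp
        ultimately show ?thesis using no_cross[OF vV v'V _ _ sR] by blast
      qed
    next
      case False
      then have A: "idx v = vadd v w" using idx_cases by blast
      show ?thesis
      proof (cases "idx v' = vsub v' w")
        case B: True
        have "vsub v' (0,2) = vadd v (0,2)" using A B eq unfolding w_def by simp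
        moreover have "Cfun lam (vsub v' (0,2)) (0,2) \<ge> 0" using cv' B unfolding C_def w_def by simp
        ultimately show ?thesis using no_cross[OF v'V vV _ _ sR] by blast
      next
        case False
        then have B: "idx v' = vadd v' w" using idx_cases by blast
        then show ?thesis using A eq by (cases v, cases v') (auto simp: vadd_def)
      qed
    qed
  qed
  define P0 where "P0 = {(int n, -1::int), (- int n, -1)}"
  have circ_val: "C (x, -1) = 1 / \<delta>^2" if "x^2 = int n ^ 2" for x
  proof -
    have a: "real_of_int (nsq (x,-1)) - lam = - \<delta>" using that unfolding nsq_def lam_def m_def by simp
    have b: "real_of_int (nsq (vadd (x,-1) w)) - lam = - \<delta>" using that unfolding nsq_def vadd_def w_def lam_def m_def by simp
    show ?thesis unfolding C_def Cfun_sign a b by (simp add: power2_eq_square)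
  qed
  have sumP0: "sum C P0 = 2 / \<delta>^2"
  proof -
    have "int n \<noteq> - int n" using n1 by simp
    then show ?thesis unfolding P0_def using circ_val[of "int n"] circ_val[of "- int n"] by simp
  qed
  have P0N: "P0 \<inter> N = {}" unfolding P0_def N_def using circ_val[of "int n"] circ_val[of "- int n"] by auto
  have UN: "U \<inter> N = {}" unfolding U_def V'_def N_def by auto
  have UP0: "U \<inter> P0 = {}"
  proof -
    have "idx v \<notin> P0" if "v \<in> V" for v
    proof
      assume "idx v \<in> P0"
      then have "idx v = (int n, -1) \<or> idx v = (- int n, -1)" unfolding P0_def by simp
      then obtain x where x: "x^2 = int n ^ 2" and ix: "idx v = (x, -1)" by (metis power2_minus)
      have vm: "nsq v \<noteq> int m" and vm2: "nsq (vadd v w) \<noteq> int m" using that unfolding V_def V2_def by auto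
      show False
      proof (cases "idx v = vsub v w")
        case True
        then have "v = (x, 1)" using ix by (cases v) (auto simp: vsub_def w_def)
        then show False using vm x unfolding nsq_def m_def by simp
      next
        case False
        then have "idx v = vadd v w" using idx_cases by blast
        then have "vadd v w = (x, -1)" using ix by simp
        then show False using vm2 x unfolding nsq_def m_def by simp
      qed
    qed
    then show ?thesis unfolding U_def V'_def by auto
  qed
  have finU: "finite U" unfolding U_def V'_def using finV by simp
  define Circ where "Circ = {v::int\<times>int. nsq v = int m}"
  define Circ2 where "Circ2 = {v::int\<times>int. nsq (vadd v w) = int m}"
  define E where "E = {int n, - int n} \<times> {-3..1::int}"
  have finCirc: "finite Circ" unfolding Circ_def by (rule finite_subset[OF _ finite_disc[of "int m"]]) auto
  have cardCirc: "card Circ \<le> 32" using r2 unfolding Circ_def r2_def m_def nsq_def by simp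
  have Circ2sub: "Circ2 \<subseteq> (\<lambda>u. vsub u w) ` Circ"
  proof
    fix v assume "v \<in> Circ2"
    then have "vadd v w \<in> Circ" "v = vsub (vadd v w) w" unfolding Circ2_def Circ_def
      by (auto simp: vadd_def vsub_def)
    then show "v \<in> (\<lambda>u. vsub u w) ` Circ" by blast
  qed
  have finCirc2: "finite Circ2" using Circ2sub finCirc finite_subset by blast
  have cardCirc2: "card Circ2 \<le> 32"
    using card_mono[OF finite_imageI[OF finCirc] Circ2sub] card_image_le[OF finCirc, of "\<lambda>u. vsub u w"] cardCirc
    by linarith
  have finE: "finite E" unfolding E_def by simp
  have cardE: "card E \<le> 10"
  proof -
    have "card {int n, - int n} \<le> 2" by (rule card_insert_le_m1) auto
    moreover have "card {-3..1::int} = 5" by simp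
    ultimately show ?thesis unfolding E_def card_cartesian_product by simp
  qed
  have NVsub: "N - V \<subseteq> Circ \<union> Circ2 \<union> E"
  proof
    fix v assume vNV: "v \<in> N - V"
    then have vN: "v \<in> N" and vV: "v \<notin> V" by auto
    show "v \<in> Circ \<union> Circ2 \<union> E"
    proof (cases "nsq v = int m \<or> nsq (vadd v w) = int m")
      case True then show ?thesis unfolding Circ_def Circ2_def by auto
    next
      case False
      have Cneg: "Cfun lam v w < 0" using vN unfolding N_def C_def by simp
      have ngl: "real_of_int (nsq v) < lam \<or> real_of_int (nsq (vadd v w)) < lam"
        using negN[OF vN] by (auto simp: mult_less_0_iff)
      have ylt: "\<bar>real_of_int (snd v)\<bar> < R + 2"
      proof -
        have R0': "0 \<le> R" using R100 by simp
        have "(real_of_int (snd v))^2 < R^2 \<or> (real_of_int (snd v) + 2)^2 < R^2"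
        proof -
          have "real_of_int (nsq v) = (real_of_int (fst v))^2 + (real_of_int (snd v))^2"
            unfolding nsq_v by simp
          moreover have "real_of_int (nsq (vadd v w)) = (real_of_int (fst v))^2 + (real_of_int (snd v) + 2)^2"
            unfolding nsq_add by simp
          ultimately show ?thesis using ngl RR zero_le_power2[of "real_of_int (fst v)"] by linarith
        qed
        then have "\<bar>real_of_int (snd v)\<bar>^2 < R^2 \<or> \<bar>real_of_int (snd v) + 2\<bar>^2 < R^2" by simp
        then have "\<bar>real_of_int (snd v)\<bar> < R \<or> \<bar>real_of_int (snd v) + 2\<bar> < R"
          using power_less_imp_less_base[OF _ R0'] by blast
        then show ?thesis by linarith
      qed
      have ip3: "\<bar>real_of_int (ip v w)\<bar> \<le> 3 * R" unfolding ipv using ylt R100 by simp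
      have "\<not> (sqrt R / 2 \<le> \<bar>real_of_int (ip v w)\<bar>)"
        using vV Cneg False ip3 unfolding V_def V2_def by auto
      then have sm: "4 * \<bar>real_of_int (snd v)\<bar> < sqrt R" unfolding ipv by simp
      have "(4 * \<bar>real_of_int (snd v)\<bar>)^2 < (sqrt R)^2"
        using sm by (intro power_strict_mono) auto
      then have "16 * (real_of_int (snd v))^2 < R" using R100 by (simp add: power_mult_distrib)
      then have "real_of_int (16 * (snd v)^2) < real_of_int (int n + 1)" using Rn by simp
      then have yb: "16 * (snd v)^2 < int n + 1" by linarith
      have lamn: "lam = real (n^2+1) + \<delta>" unfolding lam_def m_def ..
      have neg2: "(real_of_int ((fst v)^2 + (snd v)^2) - lam) * (real_of_int ((fst v)^2 + (snd v + 2)^2) - lam) < 0"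
        using negN[OF vN] unfolding nsq_add unfolding nsq_v .
      have "\<bar>fst v\<bar> = int n \<and> -3 \<le> snd v \<and> snd v \<le> 1"
        by (rule column2[OF n100 yb lamn d1 neg2])
      then have "v \<in> E" unfolding E_def by (cases v) (auto simp: abs_if split: if_splits)
      then show ?thesis by simp
    qed
  qed
  have cardNV: "card (N - V) \<le> 74"
  proof -
    have "card (N - V) \<le> card (Circ \<union> Circ2 \<union> E)"
      by (rule card_mono[OF _ NVsub]) (simp add: finCirc finCirc2 finE)
    also have "\<dots> \<le> card Circ + card Circ2 + card E" by (meson card_Un_le add_right_mono order_trans)
    finally show ?thesis using cardCirc cardCirc2 cardE by linarith
  qed
  have dpos: "\<bar>\<delta>\<bar> > 0" using d0 .
  have termb: "C v \<ge> - 2 / \<bar>\<delta>\<bar>" if vN: "v \<in> N" for v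
  proof -
    have cb1: "\<bar>cfun lam x\<bar> \<le> 1/\<bar>\<delta>\<bar>" for x by (rule cbound(1)[OF lamdef d1 d0])
    have cb2: "\<bar>cfun lam x\<bar> \<le> 10/9" if "nsq x \<noteq> int m" for x by (rule cbound(2)[OF lamdef d1 d0 that])
    have notboth: "nsq v \<noteq> int m \<or> nsq (vadd v w) \<noteq> int m"
    proof (rule ccontr)
      assume "\<not> ?thesis"
      then have "real_of_int (nsq v) - lam = - \<delta>" "real_of_int (nsq (vadd v w)) - lam = - \<delta>"
        unfolding lam_def by auto
      then show False using negN[OF vN] by simp
    qed
    have "\<bar>C v\<bar> \<le> (10/9) * (1/\<bar>\<delta>\<bar>)"
    proof -
      have e: "\<bar>C v\<bar> = \<bar>cfun lam v\<bar> * \<bar>cfun lam (vadd v w)\<bar>" unfolding C_def Cfun_def by (simp add: abs_mult)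
      show ?thesis
      proof (cases "nsq v \<noteq> int m")
        case True
        show ?thesis unfolding e by (rule mult_mono[OF cb2[OF True] cb1]) auto
      next
        case False
        then have "nsq (vadd v w) \<noteq> int m" using notboth by blast
        then have "\<bar>cfun lam v\<bar> * \<bar>cfun lam (vadd v w)\<bar> \<le> (1/\<bar>\<delta>\<bar>) * (10/9)"
          by (intro mult_mono[OF cb1 cb2]) auto
        then show ?thesis unfolding e by simp
      qed
    qed
    also have "\<dots> \<le> 2 / \<bar>\<delta>\<bar>" using dpos by (simp add: field_simps)
    finally show ?thesis by linarith
  qed
  have lowNV: "sum C (N - V) \<ge> - 148 / \<bar>\<delta>\<bar>"
  proof -
    have "of_nat (card (N - V)) * (- 2 / \<bar>\<delta>\<bar>) \<le> sum C (N - V)"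
      by (rule sum_bounded_below) (use termb in auto)
    moreover have "real 74 * (- 2 / \<bar>\<delta>\<bar>) \<le> of_nat (card (N - V)) * (- 2 / \<bar>\<delta>\<bar>)"
      using cardNV dpos by (intro mult_right_mono_neg) auto
    ultimately show ?thesis by simp
  qed
  have sumN: "sum C N = sum C (N - V) + sum C V" by (rule sum.subset_diff[OF VN finN])
  have sumS: "sum (Sfun lam w) V \<le> sum C V + sum C U"
  proof -
    have "sum (Sfun lam w) V = sum C V + sum (C \<circ> idx) V" unfolding Seq by (simp add: sum.distrib)
    moreover have "sum (C \<circ> idx) V = sum (C \<circ> idx) (V - V') + sum (C \<circ> idx) V'"
      by (rule sum.subset_diff) (auto simp: V'_def finV)
    moreover have "sum (C \<circ> idx) (V - V') \<le> 0" by (rule sum_nonpos) (auto simp: V'_def)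
    moreover have "sum (C \<circ> idx) V' = sum C U" unfolding U_def by (rule sum.reindex[OF injV', symmetric])
    ultimately show ?thesis by linarith
  qed
  have finP0: "finite P0" unfolding P0_def by simp
  have "sum C (N \<union> P0 \<union> U) \<le> infsum C UNIV"
    by (rule finite_sum_le_infsum[OF summ]) (use finN finP0 finU in \<open>auto simp: N_def\<close>)
  moreover have "sum C (N \<union> P0 \<union> U) = sum C N + sum C P0 + sum C U"
  proof -
    have "sum C (N \<union> P0 \<union> U) = sum C (N \<union> P0) + sum C U"
      by (rule sum.union_disjoint) (use finN finP0 finU UN UP0 in auto)
    moreover have "sum C (N \<union> P0) = sum C N + sum C P0"
      by (rule sum.union_disjoint) (use finN finP0 P0N in auto)
    ultimately show ?thesis by simp
  qed
  ultimately have fin: "2 / \<delta>^2 - 148 / \<bar>\<delta>\<bar> + sum (Sfun lam w) V \<le> infsum C UNIV"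
    using sumP0 sumN lowNV sumS by linarith
  show ?thesis using summ fin unfolding C_def V_def R_def lam_def m_def w_def by simp
qed
theorem corollary5p3:
  shows "\<exists>K R0::real. \<forall>(n::nat) (\<delta>::real).
     (let m = n\<^sup>2 + 1; lam = real m + \<delta>; R = sqrt lam; w = (0::int, 2::int) in
       (1 \<le> n \<and> r2 m \<le> 32 \<and> 0 < \<bar>\<delta>\<bar> \<and> \<bar>\<delta>\<bar> < 1/10 \<and> R0 \<le> R) \<longrightarrow>
       ((\<lambda>v. Cfun lam v w) summable_on UNIV \<and>
        (\<Sum>\<^sub>\<infinity>v. Cfun lam v w) \<ge>
          2 / \<delta>\<^sup>2 - K / \<bar>\<delta>\<bar> + (\<Sum>v\<in>V2 lam m R w. Sfun lam w v)))"
  unfolding Let_def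
  apply (rule exI[of _ 148], rule exI[of _ 100], intro allI impI)
  apply (elim conjE)
  apply (rule main)
      apply assumption+
  done

end
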